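(* In the setting below, the map $\varphi:B\to \mathcal A$ defined by $\varphi(a_g\delta_g\#v_h)=a_g\otimes u_g\otimes v_h$ ($a_g\in E_g$) is a homomorphism of $K$-algebras, and there is an exact sequence of $K$-algebras $$0\longrightarrow D\longrightarrow B\xrightarrow{\ \varphi\ }\varphi(C)\longrightarrow 0,$$ where $\varphi(B)=\varphi(C)$ and $\ker\varphi=D$. In particular $\varphi$ restricts to an injective algebra homomorphism on $C$, and $B_0$ is isomorphic to a subalgebra of $\mathcal A$.
   Context: Groupoid conventions. A groupoid is a small category with all morphisms invertible, regarded as the set $G$ of morphisms. For $g\in G$ we have $d(g)=g^{-1}g$ and $r(g)=gg^{-1}$. The product $gh$ is defined iff $d(g)=r(h)$, and then $d(gh)=d(h)$, $r(gh)=r(g)$. $G^2=\{(g,h): d(g)=r(h)\}$, and $G_0$ is the set of identities. Actions. An action of $G$ on a ring $R$ is a pair $\beta=(\{E_g\},\{\beta_g\})$ where each $E_g=E_{r(g)}$ is an ideal of $R$, each $\beta_g:E_{g^{-1}}\to E_g$ is a ring isomorphism, $\beta_e=\mathrm{id}$ for $e\in G_0$, and $\beta_g\beta_h=\beta_{gh}$ on $E_{h^{-1}}$ for $(g,h)\in G^2$. Setting. $K$ is a commutative unital ring and $G$ is a finite groupoid. $R$ is a unital $K$-algebra with an action $\beta$ of $G$ by $K$-linear maps such that each $E_e$, $e\in G_0$, has an identity $1_e$, and $R=\bigoplus_{e\in G_0}E_e$. Put $1_g=1_{r(g)}$. Skew groupoid ring and $B$: - $R\star_\beta G=\bigoplus_g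 E_g\delta_g$ with $(x\delta_g)(y\delta_h)=x\beta_g(y)\delta_{gh}$ if $(g,h)\in G^2$ and $0$ otherwise; it is $G$-graded with $g$-component $E_g\delta_g$. - $KG^*$ has $K$-basis $\{v_g\}$ with $v_gv_h=\delta_{g,h}v_g$; it acts on $G$-graded algebras by $v_h\cdot a=a_h$ (the $h$-component). - $B=(R\star_\beta G)\#KG^*=\bigoplus_{g,h}E_g\delta_g\#v_h$, with $(x\#v_g)(y\#v_h)=x(v_{gh^{-1}}\cdot y)\#v_h$ if $d(g)=d(h)$, and $0$ otherwise. - $C=\bigoplus_{d(g)=r(h)}E_g\delta_g\#v_h$, $D=\bigoplus_{d(g)\neq r(h)}E_g\delta_g\#v_h$, and $B_0=\bigoplus_{d(g)=r(g)=r(h)}E_g\delta_g\#v_h$. Weak bialgebras $KG$ and $KG^*$: - $KG$ has basis $\{u_g\}$, $u_gu_h=u_{gh}$ if $d(g)=r(h)$ (else $0$), $1=\sum_{e\in G_0}u_e$, $\Delta(u_g)=u_g\otimes u_g$, $\varepsilon(u_g)=1$, and antipode $S(u_g)=u_{g^{-1}}$. - $KG^*$ has $\Delta(v_g)=\sum_{d(h)=d(g)}v_{gh^{-1}}\otimes v_h$, $\varepsilon(\sum a_gv_g)=\sum_{e\in G_0}a_e$, and antipode $S(v_g)=v_{g^{-1}}$. - For a weak bialgebra $H$, $\varepsilon_t(x)=\sum\varepsilon(1_{(1)}x)1_{(2)}$ and $H_t=\varepsilon_t(H)$. One has $KG_t=\bigoplus_{e\in G_0}Ku_e$ and $KG^*_t=\sum_{e\in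 G_0}K\sum_{h: r(h)=e}v_h$. The algebra $\mathcal A$: - $R$ is a $KG$-module algebra via $u_g\cdot r=\beta_g(r1_{g^{-1}})$, and a right $KG_t$-module via $r\cdot z=S(z)\cdot r$; $KG$ is a left $KG_t$-module by multiplication. - $X=R\otimes_{KG_t}KG$ is a unital $K$-algebra with $(r\otimes u_g)(s\otimes u_h)=r(u_g\cdot s)\otimes u_gu_h$. - $X$ is a $KG^*$-module algebra via $v_k\cdot(r\otimes u_g)=\delta_{k,g}\,r\otimes u_g$, and a right $KG^*_t$-module via $x\cdot z=S(z)\cdot x$; $KG^*$ is a left $KG^*_t$-module by multiplication. - $\mathcal A=X\otimes_{KG^*_t}KG^*$ is the unital $K$-algebra with $(x\otimes v_g)(y\otimes v_h)=x(v_{gh^{-1}}\cdot y)\otimes v_h$ if $d(g)=d(h)$ and $0$ otherwise, and identity $1_R\otimes1_{KG}\otimes1_{KG^*}$. Elements of $\mathcal A$ are written $r\otimes u_g\otimes v_h$. *)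

theory Defs
  imports Main
begin

text \<open>A groupoid is given by its set of morphisms G (a subset of a type 'g), a
 multiplication mul (only meaningful on composable pairs) and an inversion iv.
 d g = g^-1 g and r g = g g^-1, exactly as in the paper.\<close>

definition gd :: "('g \<Rightarrow> 'g \<Rightarrow> 'g) \<Rightarrow> ('g \<Rightarrow> 'g) \<Rightarrow> 'g \<Rightarrow> 'g" where
  "gd mul iv g = mul (iv g) g"

definition gr :: "('g \<Rightarrow> 'g \<Rightarrow> 'g) \<Rightarrow> ('g \<Rightarrow> 'g) \<Rightarrow> 'g \<Rightarrow> 'g" where
  "gr mul iv g = mul g (iv g)"

definition groupoid :: "'g set \<Rightarrow> ('g \<Rightarrow> 'g \<Rightarrow> 'g) \<Rightarrow> ('g \<Rightarrow> 'g) \<Rightarrow> bool" where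
  "groupoid G mul iv \<longleftrightarrow>
     (\<forall>g\<in>G. iv g \<in> G \<and> iv (iv g) = g) \<and>
     (\<forall>g\<in>G. \<forall>h\<in>G. gd mul iv g = gr mul iv h \<longrightarrow>
         mul g h \<in> G \<and> gd mul iv (mul g h) = gd mul iv h \<and> gr mul iv (mul g h) = gr mul iv g) \<and>
     (\<forall>g\<in>G. \<forall>h\<in>G. \<forall>k\<in>G. gd mul iv g = gr mul iv h \<and> gd mul iv h = gr mul iv k \<longrightarrow>
         mul (mul g h) k = mul g (mul h k)) \<and>
     (\<forall>g\<in>G. gd mul iv g \<in> G \<and> gr mul iv g \<in> G \<and>
         gd mul iv (gd mul iv g) = gd mul iv g \<and> gr mul iv (gd mul iv g) = gd mul iv g \<and>
         gd mul iv (gr mul iv g) = gr mul iv g \<and> gr mul iv (gr mul iv g) = gr mul iv g) \<and>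
     (\<forall>g\<in>G. mul (gr mul iv g) g = g \<and> mul g (gd mul iv g) = g) \<and>
     (\<forall>g\<in>G. gd mul iv (iv g) = gr mul iv g \<and> gr mul iv (iv g) = gd mul iv g)"

definition gobj :: "'g set \<Rightarrow> ('g \<Rightarrow> 'g \<Rightarrow> 'g) \<Rightarrow> ('g \<Rightarrow> 'g) \<Rightarrow> 'g set" where
  "gobj G mul iv = gd mul iv ` G"

text \<open>R is the whole type 'r (a unital ring), K is the type 'k, and sm is the
 scalar multiplication making R a K-algebra.\<close>

definition kalg :: "('k::comm_ring_1 \<Rightarrow> 'r::ring_1 \<Rightarrow> 'r) \<Rightarrow> bool" where
  "kalg sm \<longleftrightarrow>
     (\<forall>c x y. sm c (x + y) = sm c x + sm c y) \<and>
     (\<forall>c c' x. sm (c + c') x = sm c x + sm c' x) \<and>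
     (\<forall>c c' x. sm (c * c') x = sm c (sm c' x)) \<and>
     (\<forall>x. sm 1 x = x) \<and>
     (\<forall>c x y. sm c (x * y) = sm c x * y \<and> sm c (x * y) = x * sm c y)"

definition ring_ideal :: "'r::ring_1 set \<Rightarrow> bool" where
  "ring_ideal I \<longleftrightarrow> 0 \<in> I \<and> (\<forall>x\<in>I. \<forall>y\<in>I. x + y \<in> I) \<and> (\<forall>x\<in>I. - x \<in> I) \<and>
     (\<forall>x\<in>I. \<forall>y. y * x \<in> I \<and> x * y \<in> I)"

definition setting ::
  "'g set \<Rightarrow> ('g \<Rightarrow> 'g \<Rightarrow> 'g) \<Rightarrow> ('g \<Rightarrow> 'g) \<Rightarrow> ('k::comm_ring_1 \<Rightarrow> 'r::ring_1 \<Rightarrow> 'r) \<Rightarrow>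
   ('g \<Rightarrow> 'r set) \<Rightarrow> ('g \<Rightarrow> 'r \<Rightarrow> 'r) \<Rightarrow> ('g \<Rightarrow> 'r) \<Rightarrow> bool" where
  "setting G mul iv sm E \<beta> one \<longleftrightarrow>
     groupoid G mul iv \<and> finite G \<and> kalg sm \<and>
     (\<forall>g\<in>G. E g = E (gr mul iv g) \<and> ring_ideal (E g)) \<and>
     (\<forall>g\<in>G. bij_betw (\<beta> g) (E (iv g)) (E g) \<and>
        (\<forall>x\<in>E (iv g). \<forall>y\<in>E (iv g). \<beta> g (x + y) = \<beta> g x + \<beta> g y \<and> \<beta> g (x * y) = \<beta> g x * \<beta> g y) \<and>
        (\<forall>c. \<forall>x\<in>E (iv g). \<beta> g (sm c x) = sm c (\<beta> g x))) \<and>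
     (\<forall>e\<in>gobj G mul iv. \<forall>x\<in>E e. \<beta> e x = x) \<and>
     (\<forall>g\<in>G. \<forall>h\<in>G. gd mul iv g = gr mul iv h \<longrightarrow>
        (\<forall>x\<in>E (iv h). \<beta> g (\<beta> h x) = \<beta> (mul g h) x)) \<and>
     (\<forall>e\<in>gobj G mul iv. one e \<in> E e \<and> (\<forall>x\<in>E e. one e * x = x \<and> x * one e = x)) \<and>
     (\<forall>x. \<exists>f. (\<forall>e\<in>gobj G mul iv. f e \<in> E e) \<and> x = (\<Sum>e\<in>gobj G mul iv. f e)) \<and>
     (\<forall>f. (\<forall>e\<in>gobj G mul iv. f e \<in> E e) \<and> (\<Sum>e\<in>gobj G mul iv. f e) = 0 \<longrightarrow>
        (\<forall>e\<in>gobj G mul iv. f e = 0))"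

text \<open>An element of B = sum_{g,h} E_g delta_g # v_h is represented by its coefficient
 function b, where b (g,h) is the coefficient of delta_g # v_h.\<close>

definition Bset :: "'g set \<Rightarrow> ('g \<Rightarrow> 'r::ring_1 set) \<Rightarrow> ('g \<times> 'g \<Rightarrow> 'r) set" where
  "Bset G E = {b. (\<forall>g\<in>G. \<forall>h\<in>G. b (g, h) \<in> E g) \<and> (\<forall>g h. g \<notin> G \<or> h \<notin> G \<longrightarrow> b (g, h) = 0)}"

definition Cset :: "'g set \<Rightarrow> ('g \<Rightarrow> 'g \<Rightarrow> 'g) \<Rightarrow> ('g \<Rightarrow> 'g) \<Rightarrow> ('g \<Rightarrow> 'r::ring_1 set) \<Rightarrow> ('g \<times> 'g \<Rightarrow> 'r) set" where
  "Cset G mul iv E = {b \<in> Bset G E. \<forall>g h. gd mul iv g \<noteq> gr mul iv h \<longrightarrow> b (g, h) = 0}"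

definition Dset :: "'g set \<Rightarrow> ('g \<Rightarrow> 'g \<Rightarrow> 'g) \<Rightarrow> ('g \<Rightarrow> 'g) \<Rightarrow> ('g \<Rightarrow> 'r::ring_1 set) \<Rightarrow> ('g \<times> 'g \<Rightarrow> 'r) set" where
  "Dset G mul iv E = {b \<in> Bset G E. \<forall>g h. gd mul iv g = gr mul iv h \<longrightarrow> b (g, h) = 0}"

definition B0set :: "'g set \<Rightarrow> ('g \<Rightarrow> 'g \<Rightarrow> 'g) \<Rightarrow> ('g \<Rightarrow> 'g) \<Rightarrow> ('g \<Rightarrow> 'r::ring_1 set) \<Rightarrow> ('g \<times> 'g \<Rightarrow> 'r) set" where
  "B0set G mul iv E = {b \<in> Bset G E. \<forall>g h.
      \<not> (gd mul iv g = gr mul iv g \<and> gr mul iv g = gr mul iv h) \<longrightarrow> b (g, h) = 0}"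

text \<open>Product in B, obtained by bilinear extension of
 (x delta_g # v_g')(y delta_h # v_h') = x (v_{g' h'^-1} . y delta_h) # v_h' if d g' = d h' (else 0),
 where v_k . (y delta_h) = [k = h] y delta_h and
 (x delta_g)(y delta_h) = x beta_g(y) delta_{gh} if d g = r h (else 0).\<close>

definition multB ::
  "'g set \<Rightarrow> ('g \<Rightarrow> 'g \<Rightarrow> 'g) \<Rightarrow> ('g \<Rightarrow> 'g) \<Rightarrow> ('g \<Rightarrow> 'r::ring_1 \<Rightarrow> 'r) \<Rightarrow>
   ('g \<times> 'g \<Rightarrow> 'r) \<Rightarrow> ('g \<times> 'g \<Rightarrow> 'r) \<Rightarrow> ('g \<times> 'g \<Rightarrow> 'r)" where
  "multB G mul iv \<beta> b b' = (\<lambda>(c, h').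
     \<Sum>g\<in>G. \<Sum>g'\<in>G.
       (if h' \<in> G \<and> gd mul iv g' = gd mul iv h' \<and>
           gd mul iv g = gr mul iv (mul g' (iv h')) \<and> mul g (mul g' (iv h')) = c
        then b (g, g') * \<beta> g (b' (mul g' (iv h'), h')) else 0))"

definition kgset :: "'g set \<Rightarrow> ('g \<Rightarrow> 'k::comm_ring_1) set" where
  "kgset G = {a. \<forall>g. g \<notin> G \<longrightarrow> a g = 0}"

definition kg_t :: "'g set \<Rightarrow> ('g \<Rightarrow> 'g \<Rightarrow> 'g) \<Rightarrow> ('g \<Rightarrow> 'g) \<Rightarrow> ('g \<Rightarrow> 'k::comm_ring_1) set" where
  "kg_t G mul iv = {a. \<forall>g. g \<notin> gobj G mul iv \<longrightarrow> a g = 0}"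

text \<open>KG^*_t = sum_{e in G_0} K (sum_{r(h)=e} v_h)\<close>
definition kgstar_t :: "'g set \<Rightarrow> ('g \<Rightarrow> 'g \<Rightarrow> 'g) \<Rightarrow> ('g \<Rightarrow> 'g) \<Rightarrow> ('g \<Rightarrow> 'k::comm_ring_1) set" where
  "kgstar_t G mul iv = {a. \<exists>c. \<forall>h. a h = (if h \<in> G then c (gr mul iv h) else 0)}"

text \<open>Product in KG (u_g u_h = u_gh if d g = r h, else 0); the product in KG^* is pointwise.\<close>
definition kg_mult :: "'g set \<Rightarrow> ('g \<Rightarrow> 'g \<Rightarrow> 'g) \<Rightarrow> ('g \<Rightarrow> 'g) \<Rightarrow>
    ('g \<Rightarrow> 'k::comm_ring_1) \<Rightarrow> ('g \<Rightarrow> 'k) \<Rightarrow> ('g \<Rightarrow> 'k)" where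
  "kg_mult G mul iv z w = (\<lambda>c. \<Sum>a\<in>G. \<Sum>b\<in>G.
      (if gd mul iv a = gr mul iv b \<and> mul a b = c then z a * w b else 0))"

definition antip :: "'g set \<Rightarrow> ('g \<Rightarrow> 'g) \<Rightarrow> ('g \<Rightarrow> 'k::comm_ring_1) \<Rightarrow> ('g \<Rightarrow> 'k)" where
  "antip G iv a = (\<lambda>g. if g \<in> G then a (iv g) else 0)"

definition kg_act :: "'g set \<Rightarrow> ('g \<Rightarrow> 'g \<Rightarrow> 'g) \<Rightarrow> ('g \<Rightarrow> 'g) \<Rightarrow> ('k::comm_ring_1 \<Rightarrow> 'r::ring_1 \<Rightarrow> 'r) \<Rightarrow>
    ('g \<Rightarrow> 'r \<Rightarrow> 'r) \<Rightarrow> ('g \<Rightarrow> 'r) \<Rightarrow> ('g \<Rightarrow> 'k) \<Rightarrow> 'r \<Rightarrow> 'r" where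
  "kg_act G mul iv sm \<beta> one a x = (\<Sum>g\<in>G. sm (a g) (\<beta> g (x * one (gr mul iv (iv g)))))"

inductive_set spanK :: "('k \<Rightarrow> 'r::ring_1 \<Rightarrow> 'r) \<Rightarrow> ('i \<Rightarrow> 'r) set \<Rightarrow> ('i \<Rightarrow> 'r) set"
  for sm :: "'k \<Rightarrow> 'r \<Rightarrow> 'r" and S :: "('i \<Rightarrow> 'r) set" where
  zero: "(\<lambda>i. 0) \<in> spanK sm S"
| base: "x \<in> S \<Longrightarrow> x \<in> spanK sm S"
| add: "x \<in> spanK sm S \<Longrightarrow> y \<in> spanK sm S \<Longrightarrow> (\<lambda>i. x i + y i) \<in> spanK sm S"
| scale: "x \<in> spanK sm S \<Longrightarrow> (\<lambda>i. sm c (x i)) \<in> spanK sm S"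

text \<open>Since KG is K-free on {u_g}, R \<otimes>_K KG is identified with functions x : G \<rightarrow> R
 (x g = coefficient of u_g). X = R \<otimes>_{KG_t} KG is its quotient by the K-span of
 (x . z) \<otimes> w - x \<otimes> (z w), x in R, z in KG_t, w in KG, where x . z = S(z) . x.\<close>

definition relX :: "'g set \<Rightarrow> ('g \<Rightarrow> 'g \<Rightarrow> 'g) \<Rightarrow> ('g \<Rightarrow> 'g) \<Rightarrow> ('k::comm_ring_1 \<Rightarrow> 'r::ring_1 \<Rightarrow> 'r) \<Rightarrow>
    ('g \<Rightarrow> 'r \<Rightarrow> 'r) \<Rightarrow> ('g \<Rightarrow> 'r) \<Rightarrow> ('g \<Rightarrow> 'r) set" where
  "relX G mul iv sm \<beta> one =
     {(\<lambda>c. sm (w c) (kg_act G mul iv sm \<beta> one (antip G iv z) x) - sm (kg_mult G mul iv z w c) x)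
      | x z w. z \<in> kg_t G mul iv \<and> w \<in> kgset G}"

definition NX where
  "NX G mul iv sm \<beta> one = spanK sm (relX G mul iv sm \<beta> one)"

definition Xrep :: "'g set \<Rightarrow> ('g \<Rightarrow> 'r::ring_1) set" where
  "Xrep G = {x. \<forall>g. g \<notin> G \<longrightarrow> x g = 0}"

text \<open>Since KG^* is K-free on {v_h}, X \<otimes>_K KG^* is identified with functions F : G \<times> G \<rightarrow> R
 modulo NX in the first variable (F (g,h) = coefficient of r \<otimes> u_g \<otimes> v_h).
 \<A> = X \<otimes>_{KG^*_t} KG^* is the quotient by the K-span of relA1 (coming from NX) and
 relA2: (x . z) \<otimes> w - x \<otimes> (z w), x in X, z in KG^*_t, w in KG^*, where x . z = S(z) . x and
 v_k . (r \<otimes> u_g) = [k = g] r \<otimes> u_g.\<close>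

definition relA1 where
  "relA1 G mul iv sm \<beta> one =
     {(\<lambda>(a, k). if k = h then n a else 0) | n h. n \<in> NX G mul iv sm \<beta> one \<and> h \<in> G}"

definition relA2 :: "'g set \<Rightarrow> ('g \<Rightarrow> 'g \<Rightarrow> 'g) \<Rightarrow> ('g \<Rightarrow> 'g) \<Rightarrow> ('k::comm_ring_1 \<Rightarrow> 'r::ring_1 \<Rightarrow> 'r) \<Rightarrow>
    ('g \<times> 'g \<Rightarrow> 'r) set" where
  "relA2 G mul iv sm =
     {(\<lambda>(a, h). sm (w h) (sm (antip G iv z a) (x a)) - sm (z h * w h) (x a))
      | x z w. x \<in> Xrep G \<and> z \<in> kgstar_t G mul iv \<and> w \<in> kgset G}"

definition NA where
  "NA G mul iv sm \<beta> one = spanK sm (relA1 G mul iv sm \<beta> one \<union> relA2 G mul iv sm)"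

definition eqA where
  "eqA G mul iv sm \<beta> one F F' \<longleftrightarrow> (\<lambda>i. F i - F' i) \<in> NA G mul iv sm \<beta> one"

text \<open>Product in \<A> on representatives, bilinear extension of
 (x \<otimes> v_g)(y \<otimes> v_h) = x (v_{g h^-1} . y) \<otimes> v_h if d g = d h (else 0), with
 (r \<otimes> u_a)(s \<otimes> u_b) = r (u_a . s) \<otimes> u_a u_b in X.\<close>
definition multA ::
  "'g set \<Rightarrow> ('g \<Rightarrow> 'g \<Rightarrow> 'g) \<Rightarrow> ('g \<Rightarrow> 'g) \<Rightarrow> ('g \<Rightarrow> 'r::ring_1 \<Rightarrow> 'r) \<Rightarrow> ('g \<Rightarrow> 'r) \<Rightarrow>
   ('g \<times> 'g \<Rightarrow> 'r) \<Rightarrow> ('g \<times> 'g \<Rightarrow> 'r) \<Rightarrow> ('g \<times> 'g \<Rightarrow> 'r)" where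
  "multA G mul iv \<beta> one F F' = (\<lambda>(c, h).
     \<Sum>a\<in>G. \<Sum>g\<in>G.
       (if h \<in> G \<and> gd mul iv g = gd mul iv h \<and>
           gd mul iv a = gr mul iv (mul g (iv h)) \<and> mul a (mul g (iv h)) = c
        then F (a, g) * \<beta> a (F' (mul g (iv h), h) * one (gr mul iv (iv a))) else 0))"

definition tens3 :: "'r::ring_1 \<Rightarrow> 'g \<Rightarrow> 'g \<Rightarrow> ('g \<times> 'g \<Rightarrow> 'r)" where
  "tens3 x g h = (\<lambda>(a, k). if a = g \<and> k = h then x else 0)"

definition phi :: "'g set \<Rightarrow> ('g \<times> 'g \<Rightarrow> 'r::ring_1) \<Rightarrow> ('g \<times> 'g \<Rightarrow> 'r)" where
  "phi G b = (\<lambda>i. \<Sum>p\<in>G \<times> G. tens3 (b p) (fst p) (snd p) i)"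

end

theory Submission imports Defs begin

locale stg =
  fixes G :: "'g set" and mul :: "'g \<Rightarrow> 'g \<Rightarrow> 'g" and iv :: "'g \<Rightarrow> 'g"
    and sm :: "'k::comm_ring_1 \<Rightarrow> 'r::ring_1 \<Rightarrow> 'r"
    and E :: "'g \<Rightarrow> 'r set" and \<beta> :: "'g \<Rightarrow> 'r \<Rightarrow> 'r" and one :: "'g \<Rightarrow> 'r"
  assumes st: "setting G mul iv sm E \<beta> one"
begin

abbreviation "d \<equiv> gd mul iv"
abbreviation "r \<equiv> gr mul iv"
abbreviation "Ob \<equiv> gobj G mul iv"

lemma grp: "groupoid G mul iv" using st unfolding setting_def by (elim conjE) assumption
lemma finG: "finite G" using st unfolding setting_def by (elim conjE) assumption
lemma kal: "kalg sm" using st unfolding setting_def by (elim conjE) assumption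

lemma grp_all1: "(\<forall>g\<in>G. iv g \<in> G \<and> iv (iv g) = g)"
  using grp unfolding groupoid_def by (elim conjE) assumption
lemma grp_all2: "(\<forall>g\<in>G. \<forall>h\<in>G. d g = r h \<longrightarrow> mul g h \<in> G \<and> d (mul g h) = d h \<and> r (mul g h) = r g)"
  using grp unfolding groupoid_def by (elim conjE) assumption
lemma grp_all3: "(\<forall>g\<in>G. d g \<in> G \<and> r g \<in> G \<and> d (d g) = d g \<and> r (d g) = d g \<and> d (r g) = r g \<and> r (r g) = r g)"
  using grp unfolding groupoid_def by (elim conjE) assumption
lemma grp_all4: "(\<forall>g\<in>G. mul (r g) g = g \<and> mul g (d g) = g)"
  using grp unfolding groupoid_def by (elim conjE) assumption
lemma grp_all5: "(\<forall>g\<in>G. d (iv g) = r g \<and> r (iv g) = d g)"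
  using grp unfolding groupoid_def by (elim conjE) assumption

lemma iv_G: "g \<in> G \<Longrightarrow> iv g \<in> G" using grp_all1 by blast
lemma iv_iv: "g \<in> G \<Longrightarrow> iv (iv g) = g" using grp_all1 by blast
lemma comp: "g \<in> G \<Longrightarrow> h \<in> G \<Longrightarrow> d g = r h \<Longrightarrow> mul g h \<in> G \<and> d (mul g h) = d h \<and> r (mul g h) = r g"
  using grp_all2 by blast
lemma dr: "g \<in> G \<Longrightarrow> d g \<in> G \<and> r g \<in> G \<and> d (d g) = d g \<and> r (d g) = d g \<and> d (r g) = r g \<and> r (r g) = r g"
  using grp_all3 by blast
lemma unit: "g \<in> G \<Longrightarrow> mul (r g) g = g \<and> mul g (d g) = g"
  using grp_all4 by blast
lemma div: "g \<in> G \<Longrightarrow> d (iv g) = r g \<and> r (iv g) = d g"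
  using grp_all5 by blast

lemma obj_G: "e \<in> Ob \<Longrightarrow> e \<in> G" unfolding gobj_def using dr by auto
lemma obj_d: "e \<in> Ob \<Longrightarrow> d e = e \<and> r e = e" unfolding gobj_def using dr by auto
lemma r_obj: "g \<in> G \<Longrightarrow> r g \<in> Ob" unfolding gobj_def using div iv_G by (metis image_eqI)
lemma d_obj: "g \<in> G \<Longrightarrow> d g \<in> Ob" unfolding gobj_def by blast
lemma iv_obj: assumes "e \<in> Ob" shows "iv e = e"
proof -
  have e: "e \<in> G" "d e = e" "r e = e" using obj_G obj_d assms by auto
  have "mul (r (iv e)) (iv e) = iv e" using unit iv_G e by blast
  moreover have "r (iv e) = e" using div e by simp
  ultimately have "mul e (iv e) = iv e" by simp
  thus ?thesis using e(3) unfolding gr_def by simp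
qed

lemma st1: "\<forall>g\<in>G. E g = E (r g) \<and> ring_ideal (E g)"
  using st unfolding setting_def by (elim conjE) assumption
lemma st2: "\<forall>e\<in>Ob. \<forall>x\<in>E e. \<beta> e x = x"
  using st unfolding setting_def by (elim conjE) assumption
lemma st3: "\<forall>e\<in>Ob. one e \<in> E e \<and> (\<forall>x\<in>E e. one e * x = x \<and> x * one e = x)"
  using st unfolding setting_def by (elim conjE) assumption
lemma st4: "\<forall>f. (\<forall>e\<in>Ob. f e \<in> E e) \<and> (\<Sum>e\<in>Ob. f e) = 0 \<longrightarrow> (\<forall>e\<in>Ob. f e = 0)"
  using st unfolding setting_def by (elim conjE) assumption
lemma st5: "\<forall>g\<in>G. bij_betw (\<beta> g) (E (iv g)) (E g) \<and>
        (\<forall>x\<in>E (iv g). \<forall>y\<in>E (iv g). \<beta> g (x + y) = \<beta> g x + \<beta> g y \<and> \<beta> g (x * y) = \<beta> g x * \<beta> g y) \<and>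
        (\<forall>c. \<forall>x\<in>E (iv g). \<beta> g (sm c x) = sm c (\<beta> g x))"
  using st unfolding setting_def by (elim conjE) assumption
lemma beta_add: "g \<in> G \<Longrightarrow> x \<in> E (iv g) \<Longrightarrow> y \<in> E (iv g) \<Longrightarrow> \<beta> g (x + y) = \<beta> g x + \<beta> g y"
  using st5 by blast
lemma E_r: "g \<in> G \<Longrightarrow> E g = E (r g)" using st1 by blast
lemma E_id: "g \<in> G \<Longrightarrow> ring_ideal (E g)" using st1 by blast
lemma beta_id: "e \<in> Ob \<Longrightarrow> x \<in> E e \<Longrightarrow> \<beta> e x = x" using st2 by blast
lemma one_E: "e \<in> Ob \<Longrightarrow> one e \<in> E e" using st3 by blast
lemma one_id: "e \<in> Ob \<Longrightarrow> x \<in> E e \<Longrightarrow> one e * x = x \<and> x * one e = x" using st3 by blast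
lemma dsum: "(\<forall>e\<in>Ob. f e \<in> E e) \<Longrightarrow> (\<Sum>e\<in>Ob. f e) = 0 \<Longrightarrow> e \<in> Ob \<Longrightarrow> f e = 0"
  using st4 by blast

lemma id0: "g \<in> G \<Longrightarrow> 0 \<in> E g" using E_id unfolding ring_ideal_def by blast
lemma idadd: "g \<in> G \<Longrightarrow> x \<in> E g \<Longrightarrow> y \<in> E g \<Longrightarrow> x + y \<in> E g" using E_id unfolding ring_ideal_def by blast
lemma idneg: "g \<in> G \<Longrightarrow> x \<in> E g \<Longrightarrow> - x \<in> E g" using E_id unfolding ring_ideal_def by blast
lemma idsub: "g \<in> G \<Longrightarrow> x \<in> E g \<Longrightarrow> y \<in> E g \<Longrightarrow> x - y \<in> E g"
  using idadd idneg by (metis diff_conv_add_uminus)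
lemma idmulL: "g \<in> G \<Longrightarrow> x \<in> E g \<Longrightarrow> y * x \<in> E g" using E_id unfolding ring_ideal_def by blast
lemma idmulR: "g \<in> G \<Longrightarrow> x \<in> E g \<Longrightarrow> x * y \<in> E g" using E_id unfolding ring_ideal_def by blast

lemma sum_in_ideal: "finite S \<Longrightarrow> c \<in> G \<Longrightarrow> (\<forall>a\<in>S. f a \<in> E c) \<Longrightarrow> (\<Sum>a\<in>S. f a) \<in> E c"
  by (induction S rule: finite_induct) (auto simp: id0 idadd)

lemma finO: "finite Ob" unfolding gobj_def using finG by simp

lemma inter0: assumes "e \<in> Ob" "e' \<in> Ob" "e \<noteq> e'" "y \<in> E e" "y \<in> E e'" shows "y = 0"
proof -
  define f where "f = (\<lambda>k. (if k = e then y else 0) + (if k = e' then - y else 0))"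
  have "\<forall>k\<in>Ob. f k \<in> E k"
    using assms obj_G id0 idneg idadd unfolding f_def by auto
  moreover have "(\<Sum>k\<in>Ob. f k) = 0" unfolding f_def using assms finO
    by (simp add: sum.distrib)
  ultimately have "f e = 0" using dsum assms by blast
  thus ?thesis using assms unfolding f_def by simp
qed

lemma mul_other: assumes "e \<in> Ob" "e' \<in> Ob" "e \<noteq> e'" "y \<in> E e" shows "y * one e' = 0"
  using inter0[OF assms(1-3)] idmulR[OF obj_G[OF assms(1)] assms(4)]
    idmulL[OF obj_G[OF assms(2)] one_E[OF assms(2)]] by blast

lemma sm_add: "sm c (x + y) = sm c x + sm c y" using kal unfolding kalg_def by blast
lemma sm_addk: "sm (c + c') x = sm c x + sm c' x" using kal unfolding kalg_def by blast
lemma sm_mult: "sm (c * c') x = sm c (sm c' x)" using kal unfolding kalg_def by blast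
lemma sm_one: "sm 1 x = x" using kal unfolding kalg_def by blast
lemma sm_R: "sm c (x * y) = sm c x * y" using kal unfolding kalg_def by blast
lemma sm_L: "sm c (x * y) = x * sm c y" using kal unfolding kalg_def by blast
lemma sm_0k[simp]: "sm 0 x = 0" using sm_addk[of 0 0 x] by simp
lemma sm_0[simp]: "sm c 0 = 0" using sm_add[of c 0 0] by simp


lemma obj_oneone: "e \<in> Ob \<Longrightarrow> one e * one e = one e" using one_id one_E by blast

lemma xone_E: "e \<in> Ob \<Longrightarrow> x * one e \<in> E e" using idmulL obj_G one_E by blast

lemma kgact_one:
  assumes z: "z \<in> kg_t G mul iv" and c: "c \<in> G"
  shows "kg_act G mul iv sm \<beta> one (antip G iv z) x * one (r c) = sm (z (r c)) (x * one (r c))"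
proof -
  have rc: "r c \<in> Ob" "r c \<in> G" using r_obj c obj_G by auto
  have trm: "sm (antip G iv z g) (\<beta> g (x * one (r (iv g)))) * one (r c)
      = (if g = r c then sm (z (r c)) (x * one (r c)) else 0)" if g: "g \<in> G" for g
  proof (cases "iv g \<in> Ob")
    case False
    have "z (iv g) = 0" using z False unfolding kg_t_def by blast
    moreover have "g \<noteq> r c" using False rc iv_obj by metis
    ultimately show ?thesis using g unfolding antip_def by simp
  next
    case True
    have gg: "g = iv g" using iv_iv[OF g] iv_obj[OF True] by simp
    hence gO: "g \<in> Ob" using True by simp
    have rg: "r (iv g) = g" using obj_d gO gg by metis
    have b: "\<beta> g (x * one g) = x * one g" using beta_id gO xone_E by blast
    have az: "antip G iv z g = z g" using g gg unfolding antip_def by simp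
    show ?thesis
    proof (cases "g = r c")
      case True
      thus ?thesis using rg b az sm_R obj_oneone gO by (simp add: mult.assoc)
    next
      case False
      have "x * one g * one (r c) = 0" using mul_other[OF gO rc(1) False xone_E[OF gO]] .
      thus ?thesis using rg b az sm_R False by (metis sm_0)
    qed
  qed
  have "kg_act G mul iv sm \<beta> one (antip G iv z) x * one (r c)
      = (\<Sum>g\<in>G. sm (antip G iv z g) (\<beta> g (x * one (r (iv g)))) * one (r c))"
    unfolding kg_act_def by (simp add: sum_distrib_right)
  also have "\<dots> = (\<Sum>g\<in>G. (if g = r c then sm (z (r c)) (x * one (r c)) else 0))"
    using trm by (rule sum.cong[OF refl])
  also have "\<dots> = sm (z (r c)) (x * one (r c))" using rc finG by simp
  finally show ?thesis .
qed

lemma kgmult: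
  assumes z: "z \<in> kg_t G mul iv" and c: "c \<in> G"
  shows "kg_mult G mul iv z w c = z (r c) * w c"
proof -
  have rc: "r c \<in> Ob" "r c \<in> G" using r_obj c obj_G by auto
  have trm: "(if d a = r b \<and> mul a b = c then z a * w b else 0)
     = (if b = c then (if a = r c then z a * w b else 0) else 0)" if a: "a \<in> G" and b: "b \<in> G" for a b
  proof (cases "a \<in> Ob")
    case False
    hence "z a = 0" using z unfolding kg_t_def by blast
    moreover have "a \<noteq> r c" using False rc by blast
    ultimately show ?thesis by simp
  next
    case True
    have da: "d a = a" using obj_d True by blast
    have "(d a = r b \<and> mul a b = c) \<longleftrightarrow> (a = r c \<and> b = c)"
    proof
      assume h: "d a = r b \<and> mul a b = c"
      hence "mul (r b) b = c" using da by metis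
      hence "b = c" using unit b by simp
      thus "a = r c \<and> b = c" using h da by simp
    next
      assume "a = r c \<and> b = c"
      thus "d a = r b \<and> mul a b = c" using da unit c by simp
    qed
    thus ?thesis by auto
  qed
  have "kg_mult G mul iv z w c = (\<Sum>a\<in>G. \<Sum>b\<in>G. (if b = c then (if a = r c then z a * w b else 0) else 0))"
    unfolding kg_mult_def using trm by (intro sum.cong refl) auto
  also have "\<dots> = z (r c) * w c" using rc c finG by simp
  finally show ?thesis .
qed

lemma NX_inv:
  assumes "n \<in> NX G mul iv sm \<beta> one"
  shows "\<forall>c\<in>G. n c * one (r c) = 0"
  using assms unfolding NX_def
proof (induction rule: spanK.induct)
  case zero
  then show ?case by simp
next
  case (base x)
  then obtain y z w where x: "x = (\<lambda>c. sm (w c) (kg_act G mul iv sm \<beta> one (antip G iv z) y) - sm (kg_mult G mul iv z w c) y)"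
    and z: "z \<in> kg_t G mul iv" unfolding relX_def by blast
  show ?case
  proof
    fix c assume c: "c \<in> G"
    have "x c * one (r c) = sm (w c) (kg_act G mul iv sm \<beta> one (antip G iv z) y * one (r c)) - sm (z (r c) * w c) (y * one (r c))"
      unfolding x using kgmult[OF z c] by (simp add: left_diff_distrib sm_R)
    also have "\<dots> = 0" using kgact_one[OF z c] by (simp add: sm_mult mult.commute)
    finally show "x c * one (r c) = 0" .
  qed
next
  case (add x y)
  then show ?case by (simp add: distrib_right)
next
  case (scale x c)
  then show ?case by (simp add: sm_R[symmetric])
qed

lemma NA_inv:
  assumes "F \<in> NA G mul iv sm \<beta> one"
  shows "\<forall>a\<in>G. \<forall>h\<in>G. d a = r h \<longrightarrow> F (a, h) * one (r a) = 0"
  using assms unfolding NA_def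
proof (induction rule: spanK.induct)
  case zero
  then show ?case by simp
next
  case (base x)
  then show ?case
  proof
    assume "x \<in> relA1 G mul iv sm \<beta> one"
    then obtain n h0 where x: "x = (\<lambda>(a, k). if k = h0 then n a else 0)" and n: "n \<in> NX G mul iv sm \<beta> one"
      unfolding relA1_def by blast
    show ?thesis using NX_inv[OF n] unfolding x by simp
  next
    assume "x \<in> relA2 G mul iv sm"
    then obtain y z w where x: "x = (\<lambda>(a, h). sm (w h) (sm (antip G iv z a) (y a)) - sm (z h * w h) (y a))"
      and z: "z \<in> kgstar_t G mul iv" unfolding relA2_def by blast
    obtain cc where cc: "\<forall>h. z h = (if h \<in> G then cc (r h) else 0)" using z unfolding kgstar_t_def by blast
    show ?thesis
    proof (intro ballI impI)
      fix a h assume a: "a \<in> G" and h: "h \<in> G" and dh: "d a = r h"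
      have "antip G iv z a = z h" using a h cc iv_G div dh unfolding antip_def by simp
      hence "x (a, h) = 0" unfolding x by (simp add: sm_mult[symmetric] mult.commute)
      thus "x (a, h) * one (r a) = 0" by simp
    qed
  qed
next
  case (add x y)
  then show ?case by (simp add: distrib_right)
next
  case (scale x c)
  then show ?case by (simp add: sm_R[symmetric])
qed


lemma phi_eq: "phi G b = (\<lambda>i. if i \<in> G \<times> G then b i else 0)"
proof
  fix i :: "'g \<times> 'g"
  have "phi G b i = (\<Sum>p\<in>G \<times> G. if p = i then b p else 0)"
    unfolding phi_def tens3_def by (intro sum.cong refl) (auto split: prod.splits)
  also have "\<dots> = (if i \<in> G \<times> G then b i else 0)" using finG by (simp add: sum.delta')
  finally show "phi G b i = (if i \<in> G \<times> G then b i else 0)" .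
qed

lemma phiB: "b \<in> Bset G E \<Longrightarrow> phi G b = b"
  unfolding phi_eq Bset_def by (auto intro!: ext)

lemma span_sum: "finite S \<Longrightarrow> (\<forall>p\<in>S. T p \<in> spanK sm X) \<Longrightarrow> (\<lambda>i. \<Sum>p\<in>S. T p i) \<in> spanK sm X"
proof (induction S rule: finite_induct)
  case empty
  then show ?case by (simp add: spanK.zero)
next
  case (insert p S)
  have "(\<lambda>i. T p i + (\<Sum>p\<in>S. T p i)) \<in> spanK sm X"
    using insert by (intro spanK.add) auto
  thus ?case using insert by simp
qed

lemma D_in_NA: assumes b: "b \<in> Dset G mul iv E" shows "b \<in> NA G mul iv sm \<beta> one"
proof -
  have bB: "b \<in> Bset G E" using b unfolding Dset_def by blast
  have "(\<lambda>i. \<Sum>p\<in>G \<times> G. tens3 (b p) (fst p) (snd p) i) \<in> NA G mul iv sm \<beta> one"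
    unfolding NA_def
  proof (rule span_sum)
    show "finite (G \<times> G)" using finG by simp
    show "\<forall>p\<in>G \<times> G. tens3 (b p) (fst p) (snd p) \<in> spanK sm (relA1 G mul iv sm \<beta> one \<union> relA2 G mul iv sm)"
    proof
      fix p assume p: "p \<in> G \<times> G"
      obtain a h where ah: "p = (a, h)" by (cases p)
      have a: "a \<in> G" and h: "h \<in> G" using p ah by auto
      show "tens3 (b p) (fst p) (snd p) \<in> spanK sm (relA1 G mul iv sm \<beta> one \<union> relA2 G mul iv sm)"
      proof (cases "d a = r h")
        case True
        hence "b p = 0" using b ah unfolding Dset_def by blast
        hence "tens3 (b p) (fst p) (snd p) = (\<lambda>i. 0)" unfolding tens3_def by auto
        thus ?thesis by (simp add: spanK.zero)
      next
        case False
        define x where "x = (\<lambda>k. if k = a then b p else (0::'r))"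
        define z where "z = (\<lambda>k. if k \<in> G then (if r k = d a then (1::'k) else 0) else 0)"
        define w where "w = (\<lambda>k. if k = h then (1::'k) else 0)"
        have mem: "(\<lambda>(a, h). sm (w h) (sm (antip G iv z a) (x a)) - sm (z h * w h) (x a)) \<in> relA2 G mul iv sm"
          unfolding relA2_def
        proof (intro CollectI exI conjI)
          show "x \<in> Xrep G" unfolding Xrep_def x_def using a by auto
          show "z \<in> kgstar_t G mul iv" unfolding kgstar_t_def z_def
            by (intro CollectI exI[of _ "\<lambda>e. if e = d a then 1 else 0"]) auto
          show "w \<in> kgset G" unfolding kgset_def w_def using h by auto
        qed (rule refl)
        have az: "antip G iv z a = 1" unfolding antip_def z_def using a iv_G div by simp
        have hz: "z h * w h = 0" unfolding z_def w_def using False h by auto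
        have "(\<lambda>(a, h). sm (w h) (sm (antip G iv z a) (x a)) - sm (z h * w h) (x a)) = tens3 (b p) (fst p) (snd p)"
        proof
          fix i :: "'g \<times> 'g"
          obtain a' h' where i: "i = (a', h')" by (cases i)
          show "(case i of (a, h) \<Rightarrow> sm (w h) (sm (antip G iv z a) (x a)) - sm (z h * w h) (x a)) = tens3 (b p) (fst p) (snd p) i"
            using az hz ah unfolding i tens3_def by (auto simp: x_def w_def sm_one)
        qed
        thus ?thesis using mem by (metis UnI2 spanK.base)
      qed
    qed
  qed
  thus ?thesis using phiB[OF bB] unfolding phi_def by simp
qed

lemma NA_diag: "F \<in> NA G mul iv sm \<beta> one \<Longrightarrow> a \<in> G \<Longrightarrow> h \<in> G \<Longrightarrow> d a = r h \<Longrightarrow> F (a, h) \<in> E a \<Longrightarrow> F (a, h) = 0"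
  using NA_inv[of F] one_id r_obj E_r by metis


lemma hom: assumes b: "b \<in> Bset G E" and b': "b' \<in> Bset G E"
  shows "phi G (multB G mul iv \<beta> b b') = multA G mul iv \<beta> one (phi G b) (phi G b')"
proof
  fix i :: "'g \<times> 'g"
  obtain c h where i: "i = (c, h)" by (cases i)
  show "phi G (multB G mul iv \<beta> b b') i = multA G mul iv \<beta> one (phi G b) (phi G b') i"
  proof (cases "c \<in> G \<and> h \<in> G")
    case True
    have "multB G mul iv \<beta> b b' (c, h) = multA G mul iv \<beta> one b b' (c, h)"
      unfolding multB_def multA_def split
    proof (intro sum.cong refl)
      fix a g assume a: "a \<in> G" and g: "g \<in> G"
      show "(if h \<in> G \<and> d g = d h \<and> d a = r (mul g (iv h)) \<and> mul a (mul g (iv h)) = c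
            then b (a, g) * \<beta> a (b' (mul g (iv h), h)) else 0) =
           (if h \<in> G \<and> d g = d h \<and> d a = r (mul g (iv h)) \<and> mul a (mul g (iv h)) = c
            then b (a, g) * \<beta> a (b' (mul g (iv h), h) * one (r (iv a))) else 0)"
      proof (cases "h \<in> G \<and> d g = d h \<and> d a = r (mul g (iv h)) \<and> mul a (mul g (iv h)) = c")
        case True
        have ivh: "iv h \<in> G" "r (iv h) = d h" using True iv_G div by auto
        have k: "mul g (iv h) \<in> G" using comp[OF g ivh(1)] True ivh by simp
        have "b' (mul g (iv h), h) \<in> E (mul g (iv h))" using b' k True unfolding Bset_def by blast
        hence "b' (mul g (iv h), h) \<in> E (d a)" using E_r k True by simp
        moreover have "r (iv a) = d a" using div a by simp
        ultimately have "b' (mul g (iv h), h) * one (r (iv a)) = b' (mul g (iv h), h)"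
          using one_id d_obj a by simp
        thus ?thesis by simp
      next
        case False
        show ?thesis unfolding if_not_P[OF False] by (rule refl)
      qed
    qed
    thus ?thesis using phiB b b' True unfolding i phi_eq[of "multB G mul iv \<beta> b b'"] by simp
  next
    case False
    have nP: "\<not> (h \<in> G \<and> d g = d h \<and> d a = r (mul g (iv h)) \<and> mul a (mul g (iv h)) = c)"
      if a: "a \<in> G" and g: "g \<in> G" for a g
    proof
      assume H: "h \<in> G \<and> d g = d h \<and> d a = r (mul g (iv h)) \<and> mul a (mul g (iv h)) = c"
      have ivh: "iv h \<in> G" "r (iv h) = d h" using H iv_G div by auto
      have k: "mul g (iv h) \<in> G" using comp[OF g ivh(1)] H ivh by simp
      have "c \<in> G" using comp[OF a k] H by simp
      thus False using False H by simp
    qed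
    have "multA G mul iv \<beta> one (phi G b) (phi G b') (c, h) = 0"
      unfolding multA_def split
      by (intro sum.neutral ballI) (simp add: if_not_P[OF nP])
    thus ?thesis using False unfolding i phi_eq[of "multB G mul iv \<beta> b b'"] by auto
  qed
qed

lemma B0_mult: assumes x: "x \<in> B0set G mul iv E" and y: "y \<in> B0set G mul iv E"
  shows "multB G mul iv \<beta> x y \<in> B0set G mul iv E"
proof -
  have xB: "x \<in> Bset G E" and yB: "y \<in> Bset G E" using x y unfolding B0set_def by auto
  let ?P = "\<lambda>c h a g. h \<in> G \<and> d g = d h \<and> d a = r (mul g (iv h)) \<and> mul a (mul g (iv h)) = c"
  let ?t = "\<lambda>c h a g. if ?P c h a g then x (a, g) * \<beta> a (y (mul g (iv h), h)) else 0"
  have mB: "multB G mul iv \<beta> x y (c, h) = (\<Sum>a\<in>G. \<Sum>g\<in>G. ?t c h a g)" for c h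
    unfolding multB_def by simp
  have facts: "c \<in> G \<and> d c = d (mul g (iv h)) \<and> r c = r a \<and> mul g (iv h) \<in> G \<and> d (mul g (iv h)) = r h \<and> r (mul g (iv h)) = r g"
    if a: "a \<in> G" and g: "g \<in> G" and P: "?P c h a g" for c h a g
  proof -
    have ivh: "iv h \<in> G" "r (iv h) = d h" "d (iv h) = r h" using P iv_G div by auto
    have k: "mul g (iv h) \<in> G" "d (mul g (iv h)) = r h" "r (mul g (iv h)) = r g"
      using comp[OF g ivh(1)] P ivh by auto
    show ?thesis using comp[OF a k(1)] P k by auto
  qed
  have inE: "?t c h a g \<in> E c" if a: "a \<in> G" and g: "g \<in> G" and c: "c \<in> G" for c h a g
  proof (cases "?P c h a g")
    case True
    have "x (a, g) \<in> E a" using xB a g unfolding Bset_def by blast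
    hence "x (a, g) * \<beta> a (y (mul g (iv h), h)) \<in> E a" using idmulR a by blast
    moreover have "E a = E c"
    proof -
      have "E a = E (r a)" "E c = E (r c)" using E_r a c by auto
      moreover have "r c = r a" using facts[OF a g True] by blast
      ultimately show ?thesis by simp
    qed
    ultimately show ?thesis using True by simp
  next
    case False
    show ?thesis unfolding if_not_P[OF False] by (rule id0[OF c])
  qed
  have zero: "?t c h a g = 0" if a: "a \<in> G" and g: "g \<in> G" and nc: "\<not> (d c = r c \<and> r c = r h)" for c h a g
  proof (cases "?P c h a g")
    case True
    note f = facts[OF a g True]
    show ?thesis
    proof (cases "d a = r a \<and> r a = r g")
      case False
      hence "x (a, g) = 0" using x unfolding B0set_def by blast
      thus ?thesis by simp
    next
      case T2: True
      have "y (mul g (iv h), h) = 0"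
      proof -
        have "\<not> (d (mul g (iv h)) = r (mul g (iv h)) \<and> r (mul g (iv h)) = r h)"
        proof
          assume A: "d (mul g (iv h)) = r (mul g (iv h)) \<and> r (mul g (iv h)) = r h"
          have "d c = r h" using f A by metis
          moreover have "r c = r h" using f A T2 by metis
          ultimately show False using nc by simp
        qed
        thus ?thesis using y unfolding B0set_def by blast
      qed
      moreover have "\<beta> a 0 = 0"
      proof -
        have "iv a \<in> G" using iv_G a by simp
        have hom0: "\<beta> a (0 + 0) = \<beta> a 0 + \<beta> a 0"
          using beta_add a id0[OF iv_G[OF a]] by blast
        thus ?thesis by simp
      qed
      ultimately show ?thesis using True by simp
    qed
  next
    case False
    show ?thesis unfolding if_not_P[OF False] by (rule refl)
  qed
  show ?thesis unfolding B0set_def Bset_def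
  proof (intro CollectI conjI allI ballI impI)
    fix c h assume c: "c \<in> G" and h: "h \<in> G"
    show "multB G mul iv \<beta> x y (c, h) \<in> E c" unfolding mB
      using c inE finG by (intro sum_in_ideal ballI) auto
  next
    fix c h assume ch: "c \<notin> G \<or> h \<notin> G"
    have "?t c h a g = 0" if a: "a \<in> G" and g: "g \<in> G" for a g
    proof -
      have nP: "\<not> ?P c h a g" using facts[OF a g] ch by blast
      show ?thesis unfolding if_not_P[OF nP] by (rule refl)
    qed
    thus "multB G mul iv \<beta> x y (c, h) = 0" unfolding mB
      by (intro sum.neutral ballI) simp
  next
    fix c h assume "\<not> (d c = r c \<and> r c = r h)"
    thus "multB G mul iv \<beta> x y (c, h) = 0" unfolding mB
      using zero by (intro sum.neutral ballI) simp
  qed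
qed


lemma eqA_refl: "eqA G mul iv sm \<beta> one F F"
  unfolding eqA_def NA_def by (simp add: spanK.zero)

lemma eqA_iff: "eqA G mul iv sm \<beta> one F F' \<longleftrightarrow> (\<lambda>i. F i - F' i) \<in> NA G mul iv sm \<beta> one"
  unfolding eqA_def by simp

lemma P1: "\<forall>b\<in>Bset G E. \<forall>b'\<in>Bset G E.
        eqA G mul iv sm \<beta> one (phi G (multB G mul iv \<beta> b b'))
            (multA G mul iv \<beta> one (phi G b) (phi G b'))"
  using hom eqA_refl by simp

lemma P2: "\<forall>b\<in>Bset G E. \<forall>b'\<in>Bset G E.
        eqA G mul iv sm \<beta> one (phi G (\<lambda>i. b i + b' i)) (\<lambda>i. phi G b i + phi G b' i)"
proof (intro ballI)
  fix b b' :: "'g \<times> 'g \<Rightarrow> 'r"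
  have "phi G (\<lambda>i. b i + b' i) = (\<lambda>i. phi G b i + phi G b' i)" unfolding phi_eq by auto
  thus "eqA G mul iv sm \<beta> one (phi G (\<lambda>i. b i + b' i)) (\<lambda>i. phi G b i + phi G b' i)"
    using eqA_refl by simp
qed

lemma P3: "\<forall>c. \<forall>b\<in>Bset G E.
        eqA G mul iv sm \<beta> one (phi G (\<lambda>i. sm c (b i))) (\<lambda>i. sm c (phi G b i))"
proof (intro allI ballI)
  fix c and b :: "'g \<times> 'g \<Rightarrow> 'r"
  have "phi G (\<lambda>i. sm c (b i)) = (\<lambda>i. sm c (phi G b i))" unfolding phi_eq by auto
  thus "eqA G mul iv sm \<beta> one (phi G (\<lambda>i. sm c (b i))) (\<lambda>i. sm c (phi G b i))"
    using eqA_refl by simp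
qed

lemma P4: "{b \<in> Bset G E. eqA G mul iv sm \<beta> one (phi G b) (\<lambda>i. 0)} = Dset G mul iv E"
proof
  show "{b \<in> Bset G E. eqA G mul iv sm \<beta> one (phi G b) (\<lambda>i. 0)} \<subseteq> Dset G mul iv E"
  proof
    fix b assume "b \<in> {b \<in> Bset G E. eqA G mul iv sm \<beta> one (phi G b) (\<lambda>i. 0)}"
    hence bB: "b \<in> Bset G E" and e: "eqA G mul iv sm \<beta> one (phi G b) (\<lambda>i. 0)" by auto
    have bN: "b \<in> NA G mul iv sm \<beta> one" using e phiB[OF bB] unfolding eqA_iff by simp
    show "b \<in> Dset G mul iv E" unfolding Dset_def
    proof (intro CollectI conjI allI impI bB)
      fix g h assume gh: "d g = r h"
      show "b (g, h) = 0"
      proof (cases "g \<in> G \<and> h \<in> G")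
        case True
        thus ?thesis using NA_diag[OF bN _ _ gh] bB unfolding Bset_def by blast
      next
        case False
        thus ?thesis using bB unfolding Bset_def by blast
      qed
    qed
  qed
next
  show "Dset G mul iv E \<subseteq> {b \<in> Bset G E. eqA G mul iv sm \<beta> one (phi G b) (\<lambda>i. 0)}"
  proof
    fix b assume b: "b \<in> Dset G mul iv E"
    hence bB: "b \<in> Bset G E" unfolding Dset_def by blast
    have "eqA G mul iv sm \<beta> one (phi G b) (\<lambda>i. 0)" using D_in_NA[OF b] phiB[OF bB] unfolding eqA_iff by simp
    thus "b \<in> {b \<in> Bset G E. eqA G mul iv sm \<beta> one (phi G b) (\<lambda>i. 0)}" using bB by simp
  qed
qed

lemma P5: "Cset G mul iv E \<subseteq> Bset G E" unfolding Cset_def by blast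

lemma P6: "\<forall>b\<in>Bset G E. \<exists>c\<in>Cset G mul iv E. eqA G mul iv sm \<beta> one (phi G b) (phi G c)"
proof
  fix b assume bB: "b \<in> Bset G E"
  define c where "c = (\<lambda>(g, h). if d g = r h then b (g, h) else 0)"
  have cC: "c \<in> Cset G mul iv E" unfolding Cset_def Bset_def
  proof (intro CollectI conjI allI ballI impI)
    fix g h assume g: "g \<in> G" and h: "h \<in> G"
    show "c (g, h) \<in> E g" using bB g h id0 unfolding c_def Bset_def by auto
  next
    fix g h :: 'g assume "g \<notin> G \<or> h \<notin> G"
    thus "c (g, h) = 0" using bB unfolding c_def Bset_def by auto
  next
    fix g h assume "d g \<noteq> r h"
    thus "c (g, h) = 0" unfolding c_def by auto
  qed
  hence cB: "c \<in> Bset G E" unfolding Cset_def by blast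
  have D: "(\<lambda>i. b i - c i) \<in> Dset G mul iv E" unfolding Dset_def Bset_def
  proof (intro CollectI conjI allI ballI impI)
    fix g h assume g: "g \<in> G" and h: "h \<in> G"
    show "b (g, h) - c (g, h) \<in> E g" using bB cB g h idsub unfolding Bset_def by blast
  next
    fix g h :: 'g assume "g \<notin> G \<or> h \<notin> G"
    thus "b (g, h) - c (g, h) = 0" using bB cB unfolding Bset_def by auto
  next
    fix g h assume "d g = r h"
    thus "b (g, h) - c (g, h) = 0" unfolding c_def by auto
  qed
  have "eqA G mul iv sm \<beta> one (phi G b) (phi G c)"
    using D_in_NA[OF D] phiB[OF bB] phiB[OF cB] unfolding eqA_iff by simp
  thus "\<exists>c\<in>Cset G mul iv E. eqA G mul iv sm \<beta> one (phi G b) (phi G c)" using cC by blast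
qed

lemma P7: "\<forall>c\<in>Cset G mul iv E. \<forall>c'\<in>Cset G mul iv E.
        eqA G mul iv sm \<beta> one (phi G c) (phi G c') \<longrightarrow> c = c'"
proof (intro ballI impI)
  fix c c' assume c: "c \<in> Cset G mul iv E" and c': "c' \<in> Cset G mul iv E"
    and e: "eqA G mul iv sm \<beta> one (phi G c) (phi G c')"
  have cB: "c \<in> Bset G E" and cB': "c' \<in> Bset G E" using c c' unfolding Cset_def by auto
  have N: "(\<lambda>i. c i - c' i) \<in> NA G mul iv sm \<beta> one" using e phiB[OF cB] phiB[OF cB'] unfolding eqA_iff by simp
  show "c = c'"
  proof
    fix i :: "'g \<times> 'g"
    obtain g h where i: "i = (g, h)" by (cases i)
    have "c (g, h) = c' (g, h)"
    proof (cases "g \<in> G \<and> h \<in> G")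
      case True
      show ?thesis
      proof (cases "d g = r h")
        case True2: True
        have "c (g, h) - c' (g, h) \<in> E g" using cB cB' True idsub unfolding Bset_def by blast
        hence "(\<lambda>i. c i - c' i) (g, h) = 0" using NA_diag[OF N _ _ True2] True by simp
        thus ?thesis by simp
      next
        case False
        thus ?thesis using c c' unfolding Cset_def by auto
      qed
    next
      case False
      thus ?thesis using cB cB' unfolding Bset_def by auto
    qed
    thus "c i = c' i" using i by simp
  qed
qed

lemma P8: "B0set G mul iv E \<subseteq> Cset G mul iv E"
proof
  fix b assume b: "b \<in> B0set G mul iv E"
  have bB: "b \<in> Bset G E" using b unfolding B0set_def by blast
  have z: "\<And>g h. \<not> (d g = r g \<and> r g = r h) \<Longrightarrow> b (g, h) = 0" using b unfolding B0set_def by blast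
  have "\<And>g h. d g \<noteq> r h \<Longrightarrow> b (g, h) = 0"
  proof -
    fix g h assume "d g \<noteq> r h"
    hence "\<not> (d g = r g \<and> r g = r h)" by auto
    thus "b (g, h) = 0" by (rule z)
  qed
  thus "b \<in> Cset G mul iv E" unfolding Cset_def using bB by blast
qed

lemma P9: "\<forall>c. \<forall>x\<in>B0set G mul iv E. \<forall>y\<in>B0set G mul iv E.
        multB G mul iv \<beta> x y \<in> B0set G mul iv E \<and> (\<lambda>i. x i + y i) \<in> B0set G mul iv E \<and>
        (\<lambda>i. sm c (x i)) \<in> B0set G mul iv E"
proof (intro allI ballI conjI)
  fix c x y assume x: "x \<in> B0set G mul iv E" and y: "y \<in> B0set G mul iv E"
  show "multB G mul iv \<beta> x y \<in> B0set G mul iv E" using B0_mult x y .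
  show "(\<lambda>i. x i + y i) \<in> B0set G mul iv E" using x y idadd unfolding B0set_def Bset_def by auto
  have sm_E: "sm c v \<in> E g" if g: "g \<in> G" and v: "v \<in> E g" for g v
  proof -
    have "v = v * one (r g)" using one_id r_obj g v E_r by metis
    hence "sm c v = v * sm c (one (r g))" using sm_L by metis
    thus ?thesis using idmulR g v by simp
  qed
  show "(\<lambda>i. sm c (x i)) \<in> B0set G mul iv E" using x sm_E unfolding B0set_def Bset_def by auto
qed

end

theorem theorem5p2:
  fixes G :: "'g set" and mul :: "'g \<Rightarrow> 'g \<Rightarrow> 'g" and iv :: "'g \<Rightarrow> 'g"
    and sm :: "'k::comm_ring_1 \<Rightarrow> 'r::ring_1 \<Rightarrow> 'r"
    and E :: "'g \<Rightarrow> 'r set" and \<beta> :: "'g \<Rightarrow> 'r \<Rightarrow> 'r" and one :: "'g \<Rightarrow> 'r"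
  assumes "setting G mul iv sm E \<beta> one"
  shows
    "(\<forall>b\<in>Bset G E. \<forall>b'\<in>Bset G E.
        eqA G mul iv sm \<beta> one (phi G (multB G mul iv \<beta> b b'))
            (multA G mul iv \<beta> one (phi G b) (phi G b'))) \<and>
     (\<forall>b\<in>Bset G E. \<forall>b'\<in>Bset G E.
        eqA G mul iv sm \<beta> one (phi G (\<lambda>i. b i + b' i)) (\<lambda>i. phi G b i + phi G b' i)) \<and>
     (\<forall>c. \<forall>b\<in>Bset G E.
        eqA G mul iv sm \<beta> one (phi G (\<lambda>i. sm c (b i))) (\<lambda>i. sm c (phi G b i))) \<and>
     {b \<in> Bset G E. eqA G mul iv sm \<beta> one (phi G b) (\<lambda>i. 0)} = Dset G mul iv E \<and>
     Cset G mul iv E \<subseteq> Bset G E \<and>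
     (\<forall>b\<in>Bset G E. \<exists>c\<in>Cset G mul iv E. eqA G mul iv sm \<beta> one (phi G b) (phi G c)) \<and>
     (\<forall>c\<in>Cset G mul iv E. \<forall>c'\<in>Cset G mul iv E.
        eqA G mul iv sm \<beta> one (phi G c) (phi G c') \<longrightarrow> c = c') \<and>
     B0set G mul iv E \<subseteq> Cset G mul iv E \<and>
     (\<forall>c. \<forall>x\<in>B0set G mul iv E. \<forall>y\<in>B0set G mul iv E.
        multB G mul iv \<beta> x y \<in> B0set G mul iv E \<and> (\<lambda>i. x i + y i) \<in> B0set G mul iv E \<and>
        (\<lambda>i. sm c (x i)) \<in> B0set G mul iv E)"
proof -
  interpret stg G mul iv sm E \<beta> one by (rule stg.intro) (rule assms)
  show ?thesis using P1 P2 P3 P4 P5 P6 P7 P8 P9 by (intro conjI) assumption+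
qed

end
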